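(* Let $X_1,\dots,X_n$ be independent random variables with values in $\mathbb{Z}_+=\{0,1,2,\dots\}$, and suppose that for each $i$ the probability generating function $M_{X_i}(z)=\mathbb{E}(z^{X_i})$ satisfies $$G_{X_i}(z):=\frac{M_{X_i}'(z)}{M_{X_i}(z)}=\sum_{m=0}^{\infty}a_{i,m+1}z^m .$$ Let $Y=\sum_{i=1}^n X_i$ and $\mu=\sum_{i=1}^n\sum_{m=0}^\infty a_{i,m+1}$ (the mean of $Y$). Let $\alpha>0$ and $p\in(0,1)$, $q=1-p$, satisfy $\alpha q/p=\mu$, and let $Z\sim \mathrm{NB}(\alpha,p)$. Then $$d_{TV}(Y,Z)\le \frac{1}{\alpha q}\sum_{i=1}^n\sum_{l=1}^\infty l\,\bigl|a_{i,l+1}-q\,a_{i,l}\bigr| .$$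
   Context: $\mathrm{NB}(\alpha,p)$ denotes the negative binomial distribution with $\mathbf{P}(Z=m)=\binom{\alpha+m-1}{m}p^\alpha q^m$, $m=0,1,\dots$, where $\alpha>0$, $q=1-p\in(0,1)$. The total variation distance is $d_{TV}(Y,X)=\frac12\sum_{m\ge0}|\mathbf{P}(Y=m)-\mathbf{P}(X=m)|$. *)

theory Defs
  imports "HOL-Probability.Probability"
begin

definition nb_pmf :: "real \<Rightarrow> real \<Rightarrow> nat \<Rightarrow> real" where
  "nb_pmf \<alpha> p m = ((\<alpha> + real m - 1) gchoose m) * p powr \<alpha> * (1 - p) ^ m"

definition pgf :: "'a measure \<Rightarrow> ('a \<Rightarrow> nat) \<Rightarrow> real \<Rightarrow> real" where
  "pgf M X z = (\<Sum>k. measure M {\<omega> \<in> space M. X \<omega> = k} * z ^ k)"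

definition dTV :: "'a measure \<Rightarrow> ('a \<Rightarrow> nat) \<Rightarrow> (nat \<Rightarrow> real) \<Rightarrow> real" where
  "dTV M Y f = (1/2) * (\<Sum>m. \<bar>measure M {\<omega> \<in> space M. Y \<omega> = m} - f m\<bar>)"

end

theory Submission
  imports Defs
begin


lemma abs_summ:
  fixes b :: "nat \<Rightarrow> real" and q :: real
  assumes q: "0 \<le> q" "q < 1"
    and s: "summable (\<lambda>l. real (Suc l) * \<bar>b (l + 2) - q * b (l + 1)\<bar>)"
  shows "summable (\<lambda>m. \<bar>b (m + 1)\<bar>)"
proof -
  define d where "d l = \<bar>b (l + 2) - q * b (l + 1)\<bar>" for l
  define x where "x m = \<bar>b (m + 1)\<bar>" for m
  have sd: "summable d"
  proof (rule summable_comparison_test'[where N=0, OF s])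
    fix l
    have "0 \<le> real l * \<bar>b (l + 2) - q * b (l + 1)\<bar>" by simp
    then show "norm (d l) \<le> real (Suc l) * \<bar>b (l + 2) - q * b (l + 1)\<bar>"
      by (simp add: d_def algebra_simps)
  qed
  have d0: "d l \<ge> 0" for l by (simp add: d_def)
  have xs: "x (Suc l) \<le> q * x l + d l" for l
  proof -
    have "x (Suc l) = \<bar>q * b (l + 1) + (b (l + 2) - q * b (l + 1))\<bar>" by (simp add: x_def numeral_2_eq_2)
    also have "\<dots> \<le> \<bar>q * b (l + 1)\<bar> + d l" unfolding d_def by (rule abs_triangle_ineq)
    finally show ?thesis using q by (simp add: x_def abs_mult)
  qed
  define B where "B = (x 0 + suminf d) / (1 - q)"
  have P: "(\<Sum>i<N. x i) \<le> B" for N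
  proof (cases N)
    case 0 then show ?thesis using q sd d0 suminf_nonneg[OF sd] by (simp add: B_def x_def)
  next
    case (Suc M)
    have xn: "x i \<ge> 0" for i by (simp add: x_def)
    have "(\<Sum>i<Suc M. x i) = x 0 + (\<Sum>l<M. x (Suc l))" by (rule sum.lessThan_Suc_shift)
    also have "\<dots> \<le> x 0 + (\<Sum>l<M. q * x l + d l)" by (intro add_left_mono sum_mono xs)
    also have "\<dots> = x 0 + q * (\<Sum>l<M. x l) + (\<Sum>l<M. d l)" by (simp add: sum.distrib sum_distrib_left)
    also have "\<dots> \<le> x 0 + q * (\<Sum>l<Suc M. x l) + suminf d"
      using sum_le_suminf[OF sd, of "{..<M}"] d0 q xn
      by (intro add_mono mult_left_mono) auto
    finally have "(1 - q) * (\<Sum>i<Suc M. x i) \<le> x 0 + suminf d" by (simp add: algebra_simps)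
    then show ?thesis using Suc q by (simp add: B_def field_simps)
  qed
  have "summable x" by (rule summableI_nonneg_bounded[OF _ P]) (simp add: x_def)
  then show ?thesis unfolding x_def .
qed

lemma powser_unique0:
  fixes d :: "nat \<Rightarrow> real"
  assumes s: "s > 0" and z: "\<And>z. \<bar>z\<bar> < s \<Longrightarrow> (\<lambda>k. d k * z ^ k) sums 0"
  shows "d k = 0"
proof (induction k rule: less_induct)
  case (less k)
  have sh: "(\<lambda>j. d (j + k) * z ^ j) sums 0" if "z \<noteq> 0" "norm z < s" for z
  proof -
    have "(\<lambda>i. d (i + k) * z ^ (i + k)) sums (0 - (\<Sum>i<k. d i * z ^ i))"
      using sums_split_initial_segment[OF z[of z], of k] that by simp
    also have "(\<Sum>i<k. d i * z ^ i) = 0" using less by simp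
    finally have "(\<lambda>i. d (i + k) * z ^ (i + k) * (1 / z ^ k)) sums (0 * (1 / z ^ k))"
      by (intro sums_mult2) simp
    then show ?thesis using that by (simp add: power_add)
  qed
  have "((\<lambda>z::real. 0::real) \<longlongrightarrow> d (0 + k)) (at 0)"
    by (rule powser_limit_0_strong[OF s, of "\<lambda>j. d (j + k)" "\<lambda>z. 0", OF sh])
  then show ?case by (simp add: tendsto_const_iff)
qed




lemma infsum_nat_eq_suminf:
  fixes g :: "nat \<Rightarrow> real"
  assumes "g summable_on UNIV" shows "infsum g UNIV = suminf g"
  by (metis assms has_sum_imp_sums has_sum_infsum sums_unique)

lemma suminf_swap_real:
  fixes u :: "nat \<Rightarrow> nat \<Rightarrow> real"
  assumes s1: "\<And>l. summable (\<lambda>k. \<bar>u l k\<bar>)" and s2: "summable (\<lambda>l. \<Sum>k. \<bar>u l k\<bar>)"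
  shows "(\<Sum>l. \<Sum>k. u l k) = (\<Sum>k. \<Sum>l. u l k)"
proof -
  have i1: "(\<lambda>k. norm (u l k)) summable_on UNIV" for l
    using s1[of l] by (subst summable_on_UNIV_nonneg_real_iff) auto
  have i2: "infsum (\<lambda>k. norm (u l k)) UNIV = (\<Sum>k. \<bar>u l k\<bar>)" for l
    using infsum_nat_eq_suminf[OF i1[of l]] by simp
  have i3: "(\<lambda>l. norm (infsum (\<lambda>k. norm (u l k)) UNIV)) summable_on UNIV"
  proof -
    have "(\<Sum>k. \<bar>u l k\<bar>) \<ge> 0" for l by (rule suminf_nonneg[OF s1]) simp
    then have "(\<lambda>l. \<bar>\<Sum>k. \<bar>u l k\<bar>\<bar>) = (\<lambda>l. \<Sum>k. \<bar>u l k\<bar>)" by simp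
    then show ?thesis unfolding i2 using s2 by (subst summable_on_UNIV_nonneg_real_iff) auto
  qed
  have abs: "(\<lambda>x. norm ((\<lambda>(l,k). u l k) x)) summable_on (UNIV \<times> UNIV)"
    using Infinite_Sum.abs_summable_on_Sigma_iff[where f="\<lambda>(l,k). u l k" and A=UNIV and B="\<lambda>_. UNIV"] i1 i3 by auto
  have sm: "(\<lambda>(l,k). u l k) summable_on (UNIV \<times> UNIV)"
    by (rule abs_summable_summable[OF abs])
  have abs': "(\<lambda>x. norm ((\<lambda>(k,l). u l k) x)) summable_on (UNIV \<times> UNIV)"
    using abs summable_on_swap[of "\<lambda>x. norm (case x of (l,k) \<Rightarrow> u l k)" UNIV UNIV]
    by (simp add: case_prod_unfold)
  have sm': "(\<lambda>(k,l). u l k) summable_on (UNIV \<times> UNIV)"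
    by (rule abs_summable_summable[OF abs'])
  have j1: "(\<lambda>l. u l k) summable_on UNIV" for k
    using Infinite_Sum.abs_summable_on_Sigma_iff[where f="\<lambda>(k,l). u l k" and A=UNIV and B="\<lambda>_. UNIV"] abs'
    by (auto intro: abs_summable_summable)
  have sw: "infsum (\<lambda>l. infsum (\<lambda>k. u l k) UNIV) UNIV = infsum (\<lambda>k. infsum (\<lambda>l. u l k) UNIV) UNIV"
    by (rule infsum_swap_banach) (use sm in simp)
  have o1: "(\<lambda>l. infsum (\<lambda>k. u l k) UNIV) summable_on UNIV"
    using summable_on_Sigma_banach[of "\<lambda>l k. u l k" UNIV "\<lambda>_. UNIV"] sm by simp
  have o2: "(\<lambda>k. infsum (\<lambda>l. u l k) UNIV) summable_on UNIV"
    using summable_on_Sigma_banach[of "\<lambda>k l. u l k" UNIV "\<lambda>_. UNIV"] sm' by simp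
  have e1: "infsum (\<lambda>k. u l k) UNIV = (\<Sum>k. u l k)" for l
    by (rule infsum_nat_eq_suminf[OF abs_summable_summable[OF i1]])
  have e2: "infsum (\<lambda>l. u l k) UNIV = (\<Sum>l. u l k)" for k
    by (rule infsum_nat_eq_suminf[OF j1])
  show ?thesis
    using sw infsum_nat_eq_suminf[OF o1] infsum_nat_eq_suminf[OF o2] unfolding e1 e2 by simp
qed




context
  fixes pi :: "nat \<Rightarrow> real" and \<alpha> q :: real and ind :: "nat \<Rightarrow> real"
  assumes pos: "\<And>k. pi k > 0" and sums1: "pi sums 1"
    and rec: "\<And>k. real (Suc k) * pi (Suc k) = q * (\<alpha> + real k) * pi k"
    and q0: "0 < q" and q1: "q < 1" and a0: "\<alpha> > 0"
    and ind01: "\<And>k. ind k = 0 \<or> ind k = 1"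
begin

definition "SS k = (\<Sum>i<k. pi i)"
definition "PA = (\<Sum>i. pi i * ind i)"
definition "W k = (\<Sum>i<k. pi i * (ind i - PA))"
definition "gg m = W m / (real m * pi m)"
definition "uu k = (\<Sum>i<k. pi i * ind i)"

lemma summ: "summable pi" using sums1 by (rule sums_summable)
lemma suminf1: "suminf pi = 1" using sums1 by (rule sums_unique[symmetric])

lemma ind_ge0: "ind k \<ge> 0" and ind_le1: "ind k \<le> 1"
  using ind01[of k] by auto

lemma summ_ind: "summable (\<lambda>i. pi i * ind i)"
proof (rule summable_comparison_test'[OF summ, of 0])
  fix n show "norm (pi n * ind n) \<le> pi n" using pos[of n] ind01[of n] by auto
qed

lemma tail: "1 - SS k = (\<Sum>i. pi (i + k))" "summable (\<lambda>i. pi (i + k))"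
  using suminf_split_initial_segment[OF summ, of k] suminf1 summ
  by (auto simp: SS_def summable_iff_shift)

lemma SS_le1: "SS k \<le> 1"
  using tail(1)[of k] suminf_nonneg[OF tail(2)[of k]] pos by (simp add: less_imp_le)

lemma SS_ge0: "SS k \<ge> 0" unfolding SS_def by (simp add: sum_nonneg less_imp_le pos)

lemma amono_aux:
  "real k * (1 - SS (Suc k)) \<le> q * (\<alpha> + real k) * (1 - SS k)"
proof -
  have t: "real k * pi (i + Suc k) \<le> q * (\<alpha> + real k) * pi (i + k)" for i
  proof -
    have r: "real (Suc (i+k)) * pi (Suc (i + k)) = q * (\<alpha> + real (i+k)) * pi (i+k)" by (rule rec)
    have le: "real k * (\<alpha> + real (i+k)) \<le> (\<alpha> + real k) * real (Suc (i+k))"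
      using a0 by (simp add: algebra_simps)
    have "real (Suc (i+k)) * (real k * pi (i + Suc k)) = real k * (q * (\<alpha> + real (i+k)) * pi (i+k))"
      using r by (simp add: algebra_simps)
    also have "\<dots> = (real k * (\<alpha> + real (i+k))) * (q * pi (i+k))" by (simp add: algebra_simps)
    also have "\<dots> \<le> ((\<alpha> + real k) * real (Suc (i+k))) * (q * pi (i+k))"
      by (rule mult_right_mono[OF le]) (use q0 pos in \<open>simp add: less_imp_le\<close>)
    also have "\<dots> = real (Suc (i+k)) * (q * (\<alpha> + real k) * pi (i + k))" by (simp add: algebra_simps)
    finally show ?thesis by simp
  qed
  have "real k * (1 - SS (Suc k)) = (\<Sum>i. real k * pi (i + Suc k))"
    using tail[of "Suc k"] by (simp add: suminf_mult)
  also have "\<dots> \<le> (\<Sum>i. q * (\<alpha> + real k) * pi (i + k))"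
    by (rule suminf_le[OF t summable_mult[OF tail(2)] summable_mult[OF tail(2)]])
  also have "\<dots> = q * (\<alpha> + real k) * (1 - SS k)"
    using tail[of k] by (simp add: suminf_mult)
  finally show ?thesis .
qed

definition "aa k = (1 - SS k) / (real k * pi k)"

lemma amono: assumes "k \<ge> 1" shows "aa (Suc k) \<le> aa k"
proof -
  have r: "real (Suc k) * pi (Suc k) = q * (\<alpha> + real k) * pi k" by (rule rec)
  have p1: "real k * pi k > 0" using assms pos by simp
  have p2: "q * (\<alpha> + real k) > 0" using q0 a0 by simp
  have "aa (Suc k) = (1 - SS (Suc k)) / (q * (\<alpha> + real k) * pi k)"
    unfolding aa_def r ..
  also have "\<dots> \<le> (1 - SS k) / (real k * pi k)"
  proof -
    have "(1 - SS (Suc k)) * (real k * pi k) \<le> (1 - SS k) * (q * (\<alpha> + real k) * pi k)"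
      using mult_right_mono[OF amono_aux[of k], of "pi k"] pos[of k]
      by (simp add: algebra_simps)
    then show ?thesis using p1 p2 pos[of k]
      by (simp add: divide_simps mult_pos_pos)
  qed
  finally show ?thesis unfolding aa_def .
qed

lemma amono': "k \<ge> 1 \<Longrightarrow> aa k \<le> aa 1"
proof (induction k rule: dec_induct)
  case base then show ?case by simp
next
  case (step m) then show ?case using amono[of m] by simp
qed

lemma bmono_aux: "q * (\<alpha> + real k) * SS k \<le> real k * SS (Suc k)"
proof -
  have "real k * SS (Suc k) - q * (\<alpha> + real k) * SS k \<ge> 0" for k
  proof (induction k)
    case 0 then show ?case by (simp add: SS_def)
  next
    case (Suc k)
    have r: "real (Suc k) * pi (Suc k) = q * (\<alpha> + real k) * pi k" by (rule rec)
    have e: "real (Suc k) * SS (Suc (Suc k)) - q * (\<alpha> + real (Suc k)) * SS (Suc k)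
        = (real k * SS (Suc k) - q * (\<alpha> + real k) * SS k) + (1 - q) * SS (Suc k)"
      using r by (simp add: SS_def algebra_simps)
    show ?case unfolding e using Suc q1 SS_ge0[of "Suc k"] by simp
  qed
  then show ?thesis by simp
qed

definition "bb k = SS k / (real k * pi k)"

lemma bmono: assumes "k \<ge> 1" shows "bb k \<le> bb (Suc k)"
proof -
  have r: "real (Suc k) * pi (Suc k) = q * (\<alpha> + real k) * pi k" by (rule rec)
  have p1: "real k * pi k > 0" using assms pos by simp
  have p2: "q * (\<alpha> + real k) > 0" using q0 a0 by simp
  have "SS k * (q * (\<alpha> + real k) * pi k) \<le> SS (Suc k) * (real k * pi k)"
    using mult_right_mono[OF bmono_aux[of k], of "pi k"] pos[of k]
    by (simp add: algebra_simps)
  then have "SS k / (real k * pi k) \<le> SS (Suc k) / (q * (\<alpha> + real k) * pi k)"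
    using p1 p2 pos[of k] assms by (simp add: divide_simps mult_pos_pos)
  then show ?thesis unfolding bb_def r .
qed


lemma W_eq: "W k = uu k - PA * SS k"
  unfolding W_def uu_def SS_def by (simp add: algebra_simps sum_subtractf sum_distrib_left)

lemma uu_facts: "0 \<le> uu k" "uu k \<le> SS k" "0 \<le> PA - uu k" "PA - uu k \<le> 1 - SS k"
proof -
  have i: "0 \<le> pi i * ind i" "pi i * ind i \<le> pi i" for i
    using pos[of i] ind01[of i] by auto
  show "0 \<le> uu k" unfolding uu_def by (simp add: sum_nonneg i)
  show "uu k \<le> SS k" unfolding uu_def SS_def by (rule sum_mono) (simp add: i)
  have t: "PA - uu k = (\<Sum>i. pi (i + k) * ind (i + k))"
    using suminf_split_initial_segment[OF summ_ind, of k] unfolding PA_def uu_def by simp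
  have ts: "summable (\<lambda>i. pi (i + k) * ind (i + k))"
    using summ_ind summable_iff_shift[of "\<lambda>i. pi i * ind i" k] by simp
  show "0 \<le> PA - uu k" unfolding t by (rule suminf_nonneg[OF ts]) (simp add: i)
  show "PA - uu k \<le> 1 - SS k" unfolding t tail(1)
    by (rule suminf_le[OF _ ts tail(2)]) (simp add: i)
qed

lemma aa1_nonneg: "aa 1 \<ge> 0"
  unfolding aa_def using SS_le1[of 1] pos[of 1] by simp

lemma g_bound: "\<bar>gg m\<bar> \<le> aa 1"
proof (cases "m = 0")
  case True then show ?thesis using aa1_nonneg by (simp add: gg_def)
next
  case False
  define u v S where "u = uu m" "v = PA - uu m" "S = SS m"
  have f: "0 \<le> u" "u \<le> S" "0 \<le> v" "v \<le> 1 - S" "0 \<le> S" "S \<le> 1"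
    using uu_facts[of m] SS_ge0[of m] SS_le1[of m] by (auto simp: u_v_S_def)
  have W: "W m = u * (1 - S) - v * S" unfolding W_eq u_v_S_def by (simp add: algebra_simps)
  have h1: "u * (1 - S) \<le> S * (1 - S)" by (rule mult_right_mono) (use f in auto)
  have h2: "v * S \<le> (1 - S) * S" by (rule mult_right_mono) (use f in auto)
  have h3: "S * (1 - S) \<le> 1 - S" using mult_right_mono[of S 1 "1 - S"] f by simp
  have h4: "0 \<le> u * (1 - S)" "0 \<le> v * S" using f by auto
  have "\<bar>W m\<bar> \<le> 1 - S" unfolding W using h1 h2 h3 h4 by (simp add: algebra_simps abs_le_iff)
  then have "\<bar>gg m\<bar> \<le> aa m" unfolding gg_def aa_def u_v_S_def
    using pos[of m] False by (simp add: abs_div divide_right_mono)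
  also have "\<dots> \<le> aa 1" using amono'[of m] False by simp
  finally show ?thesis .
qed

lemma stein_eq: "q * (\<alpha> + real k) * gg (Suc k) - real k * gg k = ind k - PA"
proof -
  have r: "real (Suc k) * pi (Suc k) = q * (\<alpha> + real k) * pi k" by (rule rec)
  have p: "q * (\<alpha> + real k) > 0" "pi k > 0" using q0 a0 pos by auto
  have e1: "q * (\<alpha> + real k) * gg (Suc k) = W (Suc k) / pi k"
  proof -
    have "q * (\<alpha> + real k) * gg (Suc k) = (q * (\<alpha> + real k) * W (Suc k)) / (q * (\<alpha> + real k) * pi k)"
      unfolding gg_def r by simp
    also have "\<dots> = W (Suc k) / pi k" using p q0 a0 by (simp only: mult_divide_mult_cancel_left_if) (simp add: add_pos_nonneg)
    finally show ?thesis .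
  qed
  have e2: "real k * gg k = W k / pi k"
    unfolding gg_def using p by (cases "k = 0") (auto simp: W_def)
  show ?thesis unfolding e1 e2 using p by (simp add: W_def diff_divide_distrib[symmetric])
qed

lemma dg_bound: assumes "k \<ge> 1" shows "\<bar>gg (Suc k) - gg k\<bar> \<le> 1 / (q * (\<alpha> + real k))"
proof -
  define u v x S pk r0 r1 where "u = uu k" "v = PA - uu k" "x = pi k * ind k" "S = SS k" "pk = pi k"
    "r0 = real k * pi k" "r1 = real (Suc k) * pi (Suc k)"
  have f: "0 \<le> u" "u \<le> S" "0 \<le> v" "v \<le> 1 - S" "0 \<le> x" "x \<le> pk"
    using uu_facts[of k] pos[of k] ind01[of k] by (auto simp: u_v_x_S_pk_r0_r1_def)
  have r: "r1 = q * (\<alpha> + real k) * pk" unfolding u_v_x_S_pk_r0_r1_def by (rule rec)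
  have pp: "r0 > 0" "r1 > 0" "pk > 0" "q * (\<alpha> + real k) > 0"
    using pos[of k] pos[of "Suc k"] assms q0 a0 by (auto simp: u_v_x_S_pk_r0_r1_def)
  define a0 a1 b0 b1 where "a0 = (1 - S) / r0" "a1 = (1 - S - pk) / r1" "b0 = S / r0" "b1 = (S + pk) / r1"
  have am: "a1 \<le> a0" using amono[OF assms]
    by (simp add: a0_a1_b0_b1_def aa_def u_v_x_S_pk_r0_r1_def SS_def diff_diff_eq)
  have bm: "b0 \<le> b1" using bmono[OF assms]
    by (simp add: a0_a1_b0_b1_def bb_def u_v_x_S_pk_r0_r1_def SS_def)
  have gk: "gg k = (u - (u + v) * S) / r0"
    by (simp add: gg_def W_eq u_v_x_S_pk_r0_r1_def)
  have gk1: "gg (Suc k) = (u + x - (u + v) * (S + pk)) / r1"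
    by (simp add: gg_def W_eq u_v_x_S_pk_r0_r1_def uu_def SS_def)
  have D: "gg (Suc k) - gg k = u * (a1 - a0) - v * (b1 - b0) + x / r1"
    unfolding gk gk1 a0_a1_b0_b1_def using pp by (simp add: field_simps)
  have L: "S * (a1 - a0) - (1 - S) * (b1 - b0) = - (pk / r1)"
    unfolding a0_a1_b0_b1_def using pp by (simp add: field_simps)
  have c1: "u * (a1 - a0) \<le> 0" using f am by (simp add: mult_nonneg_nonpos)
  have c2: "v * (b1 - b0) \<ge> 0" using f bm by simp
  have c3: "x / r1 \<le> pk / r1" using f pp by (simp add: divide_right_mono)
  have c4: "x / r1 \<ge> 0" using f pp by simp
  have c5: "u * (a1 - a0) \<ge> S * (a1 - a0)"
    using mult_right_mono_neg[of u S "a1 - a0"] f am by simp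
  have c6: "v * (b1 - b0) \<le> (1 - S) * (b1 - b0)"
    using mult_right_mono[of v "1 - S" "b1 - b0"] f bm by simp
  have "\<bar>gg (Suc k) - gg k\<bar> \<le> pk / r1"
    unfolding D using c1 c2 c3 c4 c5 c6 L by (simp add: abs_le_iff)
  also have "pk / r1 = 1 / (q * (\<alpha> + real k))" unfolding r using pp by simp
  finally show ?thesis .
qed

lemma dg_bound': "\<bar>gg (Suc (Suc j)) - gg (Suc j)\<bar> \<le> 1 / (q * \<alpha>)"
proof -
  have "\<bar>gg (Suc (Suc j)) - gg (Suc j)\<bar> \<le> 1 / (q * (\<alpha> + real (Suc j)))" by (rule dg_bound) simp
  also have "\<dots> \<le> 1 / (q * \<alpha>)"
    using q0 a0 by (intro divide_left_mono mult_left_mono) auto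
  finally show ?thesis .
qed

lemma tele: "\<bar>gg (Suc j) - gg (j + l + 2)\<bar> \<le> real (Suc l) / (q * \<alpha>)"
proof (induction l)
  case 0
  show ?case using dg_bound'[of j] by (simp add: abs_minus_commute)
next
  case (Suc l)
  have "\<bar>gg (Suc j) - gg (j + Suc l + 2)\<bar> \<le> \<bar>gg (Suc j) - gg (j + l + 2)\<bar> + \<bar>gg (Suc (Suc (j + l + 1))) - gg (Suc (j + l + 1))\<bar>"
    by (simp add: abs_minus_commute)
  also have "\<dots> \<le> real (Suc l) / (q * \<alpha>) + 1 / (q * \<alpha>)"
    by (rule add_mono[OF Suc dg_bound'])
  finally show ?case by (simp add: add_divide_distrib field_simps)
qed


lemma g_bounded: "\<bar>gg m\<bar> \<le> aa 1" by (rule g_bound)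

lemma stein_core:
  fixes f E :: "nat \<Rightarrow> real"
  assumes f0: "\<And>k. f k \<ge> 0" and fs: "f sums 1" and fm: "summable (\<lambda>k. real k * f k)"
    and Es: "summable (\<lambda>l. \<bar>E l\<bar>)"
    and key: "\<And>k. q * (\<alpha> + real k) * f k - real (Suc k) * f (Suc k)
                 = (\<Sum>l. E l) * f k - (\<Sum>l<k. E l * f (k - 1 - l))"
  shows "(\<Sum>k. f k * (ind k - PA)) = (\<Sum>l. E l * (\<Sum>j. f j * (gg (Suc j) - gg (j + l + 2))))"
proof -
  define G where "G = aa 1"
  have gb: "\<bar>gg m\<bar> \<le> G" for m unfolding G_def by (rule g_bound)
  have G0: "G \<ge> 0" using gb[of 0] by simp
  have fsum: "summable f" using fs by (rule sums_summable)
  have fone: "suminf f = 1" using fs by (rule sums_unique[symmetric])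
  define A1 where "A1 k = f k * (q * (\<alpha> + real k) * gg (Suc k))" for k
  define A2 where "A2 k = f k * (real k * gg k)" for k
  have sA1: "summable A1"
  proof (rule summable_comparison_test'[where g="\<lambda>k. G * q * \<alpha> * f k + G * q * (real k * f k)" and N=0])
    show "summable (\<lambda>k. G * q * \<alpha> * f k + G * q * (real k * f k))"
      by (intro summable_add summable_mult fsum fm)
    fix k
    have "\<bar>A1 k\<bar> = (f k * (q * (\<alpha> + real k))) * \<bar>gg (Suc k)\<bar>"
      unfolding A1_def using f0[of k] q0 a0 by (simp add: abs_mult)
    also have "\<dots> \<le> (f k * (q * (\<alpha> + real k))) * G"
      by (rule mult_left_mono[OF gb]) (use f0[of k] q0 a0 in simp)
    finally show "norm (A1 k) \<le> G * q * \<alpha> * f k + G * q * (real k * f k)"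
      by (simp add: algebra_simps)
  qed
  have sA2: "summable A2"
  proof (rule summable_comparison_test'[where g="\<lambda>k. G * (real k * f k)" and N=0])
    show "summable (\<lambda>k. G * (real k * f k))" by (intro summable_mult fm)
    fix k
    have "\<bar>A2 k\<bar> = (real k * f k) * \<bar>gg k\<bar>"
      unfolding A2_def using f0[of k] by (simp add: abs_mult)
    also have "\<dots> \<le> (real k * f k) * G"
      by (rule mult_left_mono[OF gb]) (use f0[of k] in simp)
    finally show "norm (A2 k) \<le> G * (real k * f k)" by (simp add: algebra_simps)
  qed
  have sA2': "summable (\<lambda>k. A2 (Suc k))" using sA2 by (simp add: summable_Suc_iff)
  have step1: "(\<Sum>k. f k * (ind k - PA)) = (\<Sum>k. A1 k - A2 (Suc k))"
  proof -
    have "(\<Sum>k. f k * (ind k - PA)) = (\<Sum>k. A1 k - A2 k)"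
      unfolding A1_def A2_def stein_eq[symmetric] by (simp add: algebra_simps)
    also have "\<dots> = suminf A1 - suminf A2" by (rule suminf_diff[OF sA1 sA2, symmetric])
    also have "suminf A2 = (\<Sum>k. A2 (Suc k))"
      using suminf_split_head[OF sA2] by (simp add: A2_def)
    also have "suminf A1 - (\<Sum>k. A2 (Suc k)) = (\<Sum>k. A1 k - A2 (Suc k))"
      by (rule suminf_diff[OF sA1 sA2'])
    finally show ?thesis .
  qed
  define fs' where "fs' k l = (if l < k then f (k - 1 - l) else 0)" for k l
  define u where "u l k = E l * (f k - fs' k l) * gg (Suc k)" for l k
  have fs'0: "fs' k l \<ge> 0" for k l unfolding fs'_def using f0 by simp
  have fs'sh: "(\<lambda>k. fs' (k + Suc l) l) = f" for l
    by (rule ext) (simp add: fs'_def)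
  have fs'sum: "summable (\<lambda>k. fs' k l)" for l
    using fsum summable_iff_shift[of "\<lambda>k. fs' k l" "Suc l"] unfolding fs'sh by simp
  have fs'one: "(\<Sum>k. fs' k l) = 1" for l
  proof -
    have "(\<Sum>k. fs' k l) = (\<Sum>k. fs' (k + Suc l) l) + (\<Sum>i<Suc l. fs' i l)"
      by (rule suminf_split_initial_segment[OF fs'sum])
    also have "(\<Sum>i<Suc l. fs' i l) = 0" by (simp add: fs'_def)
    finally show ?thesis unfolding fs'sh fone by simp
  qed
  have key': "A1 k - A2 (Suc k) = (\<Sum>l. u l k)" for k
  proof -
    have fin: "(\<Sum>l. E l * fs' k l) = (\<Sum>l<k. E l * f (k - 1 - l))"
    proof -
      have "(\<Sum>l. E l * fs' k l) = (\<Sum>l<k. E l * fs' k l)"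
        by (rule suminf_finite) (auto simp: fs'_def)
      also have "\<dots> = (\<Sum>l<k. E l * f (k - 1 - l))" by (rule sum.cong) (auto simp: fs'_def)
      finally show ?thesis .
    qed
    have sE: "summable E" using Es by (rule summable_rabs_cancel)
    have sE2: "summable (\<lambda>l. E l * fs' k l)"
      by (rule summable_finite[of "{..<k}"]) (auto simp: fs'_def)
    have "(\<Sum>l. u l k) = (\<Sum>l. (E l * f k - E l * fs' k l) * gg (Suc k))"
      unfolding u_def by (simp add: algebra_simps)
    also have "\<dots> = (\<Sum>l. E l * f k - E l * fs' k l) * gg (Suc k)"
      by (rule suminf_mult2[symmetric]) (intro summable_diff summable_mult2 sE sE2)
    also have "(\<Sum>l. E l * f k - E l * fs' k l) = (\<Sum>l. E l) * f k - (\<Sum>l<k. E l * f (k - 1 - l))"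
    proof -
      have "(\<Sum>l. E l * f k - E l * fs' k l) = (\<Sum>l. E l * f k) - (\<Sum>l. E l * fs' k l)"
        by (rule suminf_diff[symmetric]) (intro summable_mult2 sE, rule sE2)
      also have "(\<Sum>l. E l * f k) = (\<Sum>l. E l) * f k" by (rule suminf_mult2[OF sE, symmetric])
      finally show ?thesis unfolding fin .
    qed
    also have "\<dots> = q * (\<alpha> + real k) * f k - real (Suc k) * f (Suc k)" by (rule key[symmetric])
    finally show ?thesis unfolding A1_def A2_def by (simp add: algebra_simps)
  qed
  have ub: "\<bar>u l k\<bar> \<le> \<bar>E l\<bar> * G * (f k + fs' k l)" for l k
  proof -
    have "\<bar>u l k\<bar> = \<bar>E l\<bar> * \<bar>f k - fs' k l\<bar> * \<bar>gg (Suc k)\<bar>" unfolding u_def by (simp add: abs_mult)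
    also have "\<dots> \<le> \<bar>E l\<bar> * (f k + fs' k l) * G"
      using f0[of k] fs'0[of k l] gb[of "Suc k"]
      by (intro mult_mono) (auto simp: mult_left_mono)
    finally show ?thesis by (simp add: algebra_simps)
  qed
  have s1: "summable (\<lambda>k. \<bar>u l k\<bar>)" for l
  proof (rule summable_comparison_test'[where N=0])
    show "summable (\<lambda>k. \<bar>E l\<bar> * G * (f k + fs' k l))"
      by (rule summable_mult[OF summable_add[OF fsum fs'sum]])
  qed (use ub in simp)
  have s1b: "(\<Sum>k. \<bar>u l k\<bar>) \<le> \<bar>E l\<bar> * G * 2" for l
  proof -
    have "(\<Sum>k. \<bar>u l k\<bar>) \<le> (\<Sum>k. \<bar>E l\<bar> * G * (f k + fs' k l))"
      by (rule suminf_le[OF ub s1 summable_mult[OF summable_add[OF fsum fs'sum]]])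
    also have "\<dots> = \<bar>E l\<bar> * G * 2"
      by (subst suminf_mult) (auto intro: summable_add fsum fs'sum simp: suminf_add[OF fsum fs'sum, symmetric] fone fs'one)
    finally show ?thesis .
  qed
  have s2: "summable (\<lambda>l. \<Sum>k. \<bar>u l k\<bar>)"
  proof (rule summable_comparison_test'[where N=0])
    show "summable (\<lambda>l. \<bar>E l\<bar> * G * 2)" by (intro summable_mult2 Es)
    fix l
    have "(\<Sum>k. \<bar>u l k\<bar>) \<ge> 0" by (rule suminf_nonneg[OF s1]) simp
    then show "norm (\<Sum>k. \<bar>u l k\<bar>) \<le> \<bar>E l\<bar> * G * 2" using s1b[of l] by simp
  qed
  have inner: "(\<Sum>k. u l k) = E l * (\<Sum>j. f j * (gg (Suc j) - gg (j + l + 2)))" for l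
  proof -
    have sfg: "summable (\<lambda>k. f k * gg (Suc k))"
      by (rule summable_comparison_test'[where N=0, OF summable_mult2[OF fsum, where c=G]])
         (use f0 gb in \<open>auto simp: abs_mult intro: mult_left_mono\<close>)
    have sfg2: "summable (\<lambda>k. fs' k l * gg (Suc k))"
      by (rule summable_comparison_test'[where N=0, OF summable_mult2[OF fs'sum, where c=G]])
         (use fs'0 gb in \<open>auto simp: abs_mult intro: mult_left_mono\<close>)
    have sfg3: "summable (\<lambda>j. f j * gg (j + l + 2))"
      by (rule summable_comparison_test'[where N=0, OF summable_mult2[OF fsum, where c=G]])
         (use f0 gb in \<open>auto simp: abs_mult intro: mult_left_mono\<close>)
    have sh: "(\<Sum>k. fs' k l * gg (Suc k)) = (\<Sum>j. f j * gg (j + l + 2))"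
    proof -
      have "(\<Sum>k. fs' k l * gg (Suc k)) = (\<Sum>k. fs' (k + Suc l) l * gg (Suc (k + Suc l))) + (\<Sum>i<Suc l. fs' i l * gg (Suc i))"
        by (rule suminf_split_initial_segment[OF sfg2])
      also have "(\<Sum>i<Suc l. fs' i l * gg (Suc i)) = 0" by (simp add: fs'_def)
      finally show ?thesis by (simp add: fs'_def)
    qed
    have "(\<Sum>k. u l k) = E l * ((\<Sum>k. f k * gg (Suc k)) - (\<Sum>k. fs' k l * gg (Suc k)))"
    proof -
      have "(\<Sum>k. u l k) = (\<Sum>k. E l * (f k * gg (Suc k) - fs' k l * gg (Suc k)))"
        unfolding u_def by (simp add: algebra_simps)
      also have "\<dots> = E l * (\<Sum>k. f k * gg (Suc k) - fs' k l * gg (Suc k))"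
        by (rule suminf_mult[OF summable_diff[OF sfg sfg2]])
      also have "(\<Sum>k. f k * gg (Suc k) - fs' k l * gg (Suc k)) = (\<Sum>k. f k * gg (Suc k)) - (\<Sum>k. fs' k l * gg (Suc k))"
        by (rule suminf_diff[OF sfg sfg2, symmetric])
      finally show ?thesis .
    qed
    also have "\<dots> = E l * (\<Sum>j. f j * (gg (Suc j) - gg (j + l + 2)))"
      unfolding sh suminf_diff[OF sfg sfg3] by (simp add: algebra_simps)
    finally show ?thesis .
  qed
  have "(\<Sum>k. f k * (ind k - PA)) = (\<Sum>k. \<Sum>l. u l k)" unfolding step1 key' ..
  also have "\<dots> = (\<Sum>l. \<Sum>k. u l k)" by (rule suminf_swap_real[OF s1 s2, symmetric])
  finally show ?thesis unfolding inner .
qed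


lemma stein_bound:
  fixes f E :: "nat \<Rightarrow> real"
  assumes f0: "\<And>k. f k \<ge> 0" and fs: "f sums 1" and fm: "summable (\<lambda>k. real k * f k)"
    and Es: "summable (\<lambda>l. real (Suc l) * \<bar>E l\<bar>)"
    and key: "\<And>k. q * (\<alpha> + real k) * f k - real (Suc k) * f (Suc k)
                 = (\<Sum>l. E l) * f k - (\<Sum>l<k. E l * f (k - 1 - l))"
  shows "(\<Sum>k. f k * (ind k - PA)) \<le> 1 / (q * \<alpha>) * (\<Sum>l. real (Suc l) * \<bar>E l\<bar>)"
proof -
  have Es1: "summable (\<lambda>l. \<bar>E l\<bar>)"
    by (rule summable_comparison_test'[where N=0, OF Es]) (auto intro: mult_le_cancel_right1[THEN iffD2] simp: mult_right_mono)
  define R where "R l = (\<Sum>j. f j * (gg (Suc j) - gg (j + l + 2)))" for l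
  define D where "D = 1 / (q * \<alpha>)"
  have fsum: "summable f" using fs by (rule sums_summable)
  have fone: "suminf f = 1" using fs by (rule sums_unique[symmetric])
  have tb: "\<bar>f j * (gg (Suc j) - gg (j + l + 2))\<bar> \<le> f j * (real (Suc l) * D)" for j l
  proof -
    have "\<bar>f j * (gg (Suc j) - gg (j + l + 2))\<bar> = f j * \<bar>gg (Suc j) - gg (j + l + 2)\<bar>"
      using f0[of j] by (simp add: abs_mult)
    also have "\<dots> \<le> f j * (real (Suc l) / (q * \<alpha>))"
      by (rule mult_left_mono[OF tele f0])
    finally show ?thesis by (simp add: D_def)
  qed
  have Rb: "\<bar>R l\<bar> \<le> real (Suc l) * D" for l
  proof -
    have s: "summable (\<lambda>j. \<bar>f j * (gg (Suc j) - gg (j + l + 2))\<bar>)"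
      by (rule summable_comparison_test'[where N=0, OF summable_mult2[OF fsum, where c="real (Suc l) * D"]]) (use tb in simp)
    have "\<bar>R l\<bar> \<le> (\<Sum>j. \<bar>f j * (gg (Suc j) - gg (j + l + 2))\<bar>)"
      unfolding R_def by (rule summable_rabs[OF s])
    also have "\<dots> \<le> (\<Sum>j. f j * (real (Suc l) * D))"
      by (rule suminf_le[OF tb s summable_mult2[OF fsum]])
    also have "\<dots> = real (Suc l) * D" using suminf_mult2[OF fsum, of "real (Suc l) * D"] fone by simp
    finally show ?thesis .
  qed
  have D0: "D \<ge> 0" using q0 a0 by (simp add: D_def)
  have b: "\<bar>E l * R l\<bar> \<le> real (Suc l) * \<bar>E l\<bar> * D" for l
    using mult_left_mono[OF Rb[of l], of "\<bar>E l\<bar>"] by (simp add: abs_mult algebra_simps)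
  have sb: "summable (\<lambda>l. real (Suc l) * \<bar>E l\<bar> * D)" by (rule summable_mult2[OF Es])
  have sa: "summable (\<lambda>l. \<bar>E l * R l\<bar>)"
    by (rule summable_comparison_test'[where N=0, OF sb]) (use b in simp)
  have "(\<Sum>k. f k * (ind k - PA)) = (\<Sum>l. E l * R l)"
    unfolding R_def by (rule stein_core[OF f0 fs fm Es1 key])
  also have "\<dots> \<le> \<bar>\<Sum>l. E l * R l\<bar>" by simp
  also have "\<dots> \<le> (\<Sum>l. \<bar>E l * R l\<bar>)" by (rule summable_rabs[OF sa])
  also have "\<dots> \<le> (\<Sum>l. real (Suc l) * \<bar>E l\<bar> * D)" by (rule suminf_le[OF b sa sb])
  also have "\<dots> = D * (\<Sum>l. real (Suc l) * \<bar>E l\<bar>)"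
    using suminf_mult2[OF Es, of D] by (simp add: mult.commute)
  finally show ?thesis unfolding D_def .
qed

end



lemma nb_rec:
  assumes "0 < p" "p < 1"
  shows "real (Suc k) * nb_pmf \<alpha> p (Suc k) = (1 - p) * (\<alpha> + real k) * nb_pmf \<alpha> p k"
proof -
  have e: "\<alpha> + real (Suc k) - 1 = (\<alpha> + real k - 1) + 1" by simp
  have "((\<alpha> + real k - 1) + 1) gchoose (Suc k) = ((\<alpha> + real k - 1) gchoose k) * (((\<alpha> + real k - 1) + 1) / real (Suc k))"
    by (rule gbinomial_rec)
  then have "(\<alpha> + real (Suc k) - 1) gchoose (Suc k) = ((\<alpha> + real k - 1) gchoose k) * ((\<alpha> + real k) / real (Suc k))"
    by (simp only: e) simp
  then have h: "real (Suc k) * ((\<alpha> + real (Suc k) - 1) gchoose (Suc k)) = (\<alpha> + real k) * ((\<alpha> + real k - 1) gchoose k)"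
    by (simp del: of_nat_Suc)
  have "real (Suc k) * nb_pmf \<alpha> p (Suc k) = (real (Suc k) * ((\<alpha> + real (Suc k) - 1) gchoose (Suc k))) * p powr \<alpha> * (1 - p) ^ Suc k"
    unfolding nb_pmf_def by (simp only: mult_ac)
  also have "\<dots> = (1 - p) * (\<alpha> + real k) * (((\<alpha> + real k - 1) gchoose k) * p powr \<alpha> * (1 - p) ^ k)"
    unfolding h by (simp only: power_Suc mult_ac)
  finally show ?thesis unfolding nb_pmf_def .
qed

lemma nb_pos:
  assumes "0 < p" "p < 1" "\<alpha> > 0"
  shows "nb_pmf \<alpha> p k > 0"
proof (induction k)
  case 0
  then show ?case using assms by (simp add: nb_pmf_def)
next
  case (Suc k)
  have "real (Suc k) * nb_pmf \<alpha> p (Suc k) > 0"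
    using nb_rec[OF assms(1,2), of k \<alpha>] Suc assms by (simp add: mult_pos_pos add_pos_nonneg)
  then show ?case by (simp add: zero_less_mult_iff)
qed

lemma nb_sums:
  assumes "0 < p" "p < 1" "\<alpha> > 0"
  shows "nb_pmf \<alpha> p sums 1"
proof -
  have "\<bar>-(1-p)\<bar> < 1" using assms by simp
  from gen_binomial_real[OF this, of "-\<alpha>"]
  have s: "(\<lambda>n. ((-\<alpha>) gchoose n) * (-(1-p))^n) sums (p powr (-\<alpha>))" by simp
  have eq: "((-\<alpha>) gchoose n) * (-(1-p))^n = ((\<alpha> + real n - 1) gchoose n) * (1-p)^n" for n
    by (simp add: gbinomial_minus power_mult_distrib[symmetric])
  have "(\<lambda>n. p powr \<alpha> * (((\<alpha> + real n - 1) gchoose n) * (1-p)^n)) sums (p powr \<alpha> * p powr (-\<alpha>))"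
    using sums_mult[OF s[unfolded eq], of "p powr \<alpha>"] .
  moreover have "p powr \<alpha> * p powr (-\<alpha>) = 1" using assms by (simp add: powr_minus)
  ultimately show ?thesis unfolding nb_pmf_def by (simp add: mult_ac)
qed




lemma pmf_sums:
  assumes P: "prob_space M" and X: "X \<in> measurable M (count_space (UNIV::nat set))"
  shows "(\<lambda>k. measure M {\<omega> \<in> space M. X \<omega> = k}) sums 1"
proof -
  interpret prob_space M by (rule P)
  have A: "range (\<lambda>k. {\<omega> \<in> space M. X \<omega> = k}) \<subseteq> sets M" using X by auto
  have D: "disjoint_family (\<lambda>k. {\<omega> \<in> space M. X \<omega> = k})" by (auto simp: disjoint_family_on_def)
  have U: "(\<Union>k. {\<omega> \<in> space M. X \<omega> = k}) = space M" by auto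
  show ?thesis using finite_measure_UNION[OF A D] unfolding U by (simp add: prob_space)
qed

lemma pgf_integral:
  assumes P: "prob_space M" and X: "X \<in> measurable M (count_space (UNIV::nat set))"
    and z: "\<bar>z\<bar> < 1"
  shows "pgf M X z = (\<integral>\<omega>. z ^ X \<omega> \<partial>M)"
proof -
  interpret prob_space M by (rule P)
  define A where "A k = {\<omega> \<in> space M. X \<omega> = k}" for k
  have As: "A k \<in> sets M" for k using X unfolding A_def by auto
  define F where "F k \<omega> = z ^ k * indicator (A k) \<omega>" for k \<omega>
  have Fi: "integrable M (F k)" for k
    unfolding F_def using As by (intro integrable_mult_right integrable_real_indicator) (auto simp: less_top[symmetric])
  have Fint: "integral\<^sup>L M (F k) = measure M (A k) * z ^ k" for k
    unfolding F_def using As by (simp add: sets.Int_space_eq2)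
  have pw: "(\<lambda>k. F k \<omega>) sums (z ^ X \<omega>)" if "\<omega> \<in> space M" for \<omega>
  proof -
    have "(\<lambda>k. F k \<omega>) = (\<lambda>k. if k = X \<omega> then z ^ k else 0)"
      using that by (auto simp: F_def A_def indicator_def)
    then show ?thesis using sums_single[of "X \<omega>" "\<lambda>k. z ^ k"] by simp
  qed
  have ae: "AE \<omega> in M. summable (\<lambda>k. norm (F k \<omega>))"
  proof (rule AE_I2)
    fix \<omega> assume "\<omega> \<in> space M"
    have "(\<lambda>k. norm (F k \<omega>)) = (\<lambda>k. if k = X \<omega> then norm (z ^ k) else 0)"
      using \<open>\<omega> \<in> space M\<close> by (auto simp: F_def A_def indicator_def)
    then show "summable (\<lambda>k. norm (F k \<omega>))" by simp
  qed
  have sn: "summable (\<lambda>k. \<integral>\<omega>. norm (F k \<omega>) \<partial>M)"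
  proof (rule summable_comparison_test'[where N=0])
    show "summable (\<lambda>k. \<bar>z\<bar> ^ k)" using z by (simp add: summable_geometric)
    fix k
    have "(\<integral>\<omega>. norm (F k \<omega>) \<partial>M) = measure M (A k) * \<bar>z\<bar> ^ k"
      unfolding F_def using As by (simp add: abs_mult power_abs sets.Int_space_eq2)
    also have "\<dots> \<le> 1 * \<bar>z\<bar> ^ k" by (intro mult_right_mono) auto
    finally show "norm (\<integral>\<omega>. norm (F k \<omega>) \<partial>M) \<le> \<bar>z\<bar> ^ k" by simp
  qed
  have "(\<integral>\<omega>. z ^ X \<omega> \<partial>M) = (\<integral>\<omega>. (\<Sum>k. F k \<omega>) \<partial>M)"
    by (rule Bochner_Integration.integral_cong[OF refl]) (simp add: sums_unique[OF pw])
  also have "\<dots> = (\<Sum>k. integral\<^sup>L M (F k))"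
    by (rule integral_suminf[OF Fi ae sn])
  finally show ?thesis unfolding pgf_def Fint A_def ..
qed

lemma pgf_prod:
  fixes n :: nat
  assumes P: "prob_space M"
    and I: "prob_space.indep_vars M (\<lambda>_. count_space UNIV) X {..<n}"
    and z: "\<bar>z\<bar> < 1"
  shows "pgf M (\<lambda>\<omega>. \<Sum>i<n. X i \<omega>) z = (\<Prod>i<n. pgf M (X i) z)"
proof -
  interpret prob_space M by (rule P)
  have Xm: "X i \<in> measurable M (count_space UNIV)" if "i < n" for i
    using I that unfolding indep_vars_def2 by auto
  have Ym: "(\<lambda>\<omega>. \<Sum>i<n. X i \<omega>) \<in> measurable M (count_space UNIV)"
  proof -
    define X' where "X' i = (if i < n then X i else (\<lambda>_. 0))" for i
    have "X' i \<in> measurable M (count_space UNIV)" for i using Xm by (auto simp: X'_def)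
    then have "(\<lambda>\<omega>. \<Sum>i<n. X' i \<omega>) \<in> measurable M (count_space UNIV)" by measurable
    moreover have "(\<lambda>\<omega>. \<Sum>i<n. X' i \<omega>) = (\<lambda>\<omega>. \<Sum>i<n. X i \<omega>)" by (auto simp: X'_def)
    ultimately show ?thesis by simp
  qed
  have I2: "indep_vars (\<lambda>_. borel) (\<lambda>i \<omega>. z ^ (X i \<omega>)) {..<n}"
    by (rule indep_vars_compose2[OF I]) simp
  have int: "integrable M (\<lambda>\<omega>. z ^ (X i \<omega>))" if "i < n" for i
  proof (rule integrable_const_bound[where B=1])
    show "AE \<omega> in M. norm (z ^ X i \<omega>) \<le> 1"
    proof (rule AE_I2)
      fix \<omega> show "norm (z ^ X i \<omega>) \<le> 1" using z by (simp add: power_abs power_le_one)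
    qed
    show "(\<lambda>\<omega>. z ^ X i \<omega>) \<in> borel_measurable M" using Xm[OF that] by measurable
  qed
  have "pgf M (\<lambda>\<omega>. \<Sum>i<n. X i \<omega>) z = (\<integral>\<omega>. z ^ (\<Sum>i<n. X i \<omega>) \<partial>M)"
    by (rule pgf_integral[OF P Ym z])
  also have "\<dots> = (\<integral>\<omega>. (\<Prod>i<n. z ^ (X i \<omega>)) \<partial>M)" by (simp add: power_sum)
  also have "\<dots> = (\<Prod>i<n. \<integral>\<omega>. z ^ (X i \<omega>) \<partial>M)"
    using indep_vars_lebesgue_integral[of "{..<n}" "\<lambda>i \<omega>. z ^ (X i \<omega>)"] I2 int by auto
  also have "\<dots> = (\<Prod>i<n. pgf M (X i) z)"
    by (rule prod.cong) (auto simp: pgf_integral[OF P Xm z])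
  finally show ?thesis .
qed




lemma coeff_identity:
  fixes M :: "'a measure" and X :: "nat \<Rightarrow> 'a \<Rightarrow> nat" and n :: nat and a :: "nat \<Rightarrow> nat \<Rightarrow> real"
  assumes P: "prob_space M"
    and I: "prob_space.indep_vars M (\<lambda>_. count_space UNIV) X {..<n}"
    and H: "\<And>i. i < n \<Longrightarrow> \<exists>r>0. r \<le> 1 \<and> (\<forall>z. \<bar>z\<bar> < r \<longrightarrow>
            pgf M (X i) z \<noteq> 0 \<and>
            (\<lambda>m. a i (m + 1) * z ^ m) sums (deriv (pgf M (X i)) z / pgf M (X i) z))"
    and A: "\<And>i. i < n \<Longrightarrow> summable (\<lambda>m. \<bar>a i (m + 1)\<bar>)"
    and n0: "n > 0"
  shows "real (Suc k) * measure M {\<omega> \<in> space M. (\<Sum>i<n. X i \<omega>) = Suc k}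
       = (\<Sum>m\<le>k. (\<Sum>i<n. a i (m + 1)) * measure M {\<omega> \<in> space M. (\<Sum>i<n. X i \<omega>) = k - m})"
proof -
  interpret prob_space M by (rule P)
  define Y where "Y \<omega> = (\<Sum>i<n. X i \<omega>)" for \<omega>
  define f where "f k = measure M {\<omega> \<in> space M. Y \<omega> = k}" for k
  define fX where "fX i k = measure M {\<omega> \<in> space M. X i \<omega> = k}" for i k
  define C where "C m = (\<Sum>i<n. a i (m + 1))" for m
  have Xm: "X i \<in> measurable M (count_space UNIV)" if "i < n" for i
    using I that unfolding indep_vars_def2 by auto
  have Ym: "Y \<in> measurable M (count_space UNIV)"
  proof -
    define X' where "X' i = (if i < n then X i else (\<lambda>_. 0))" for i
    have "X' i \<in> measurable M (count_space UNIV)" for i using Xm by (auto simp: X'_def)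
    then have "(\<lambda>\<omega>. \<Sum>i<n. X' i \<omega>) \<in> measurable M (count_space UNIV)" by measurable
    moreover have "(\<lambda>\<omega>. \<Sum>i<n. X' i \<omega>) = Y" by (auto simp: X'_def Y_def)
    ultimately show ?thesis by simp
  qed
  have fs: "f sums 1" unfolding f_def by (rule pmf_sums[OF P Ym])
  have fXs: "fX i sums 1" if "i < n" for i unfolding fX_def by (rule pmf_sums[OF P Xm[OF that]])
  have f0: "f k \<ge> 0" for k by (simp add: f_def)
  have fX0: "fX i k \<ge> 0" for i k by (simp add: fX_def)
  have pgfY: "pgf M Y = (\<lambda>z. \<Sum>k. f k * z ^ k)" by (rule ext) (simp add: pgf_def f_def)
  have pgfX: "pgf M (X i) = (\<lambda>z. \<Sum>k. fX i k * z ^ k)" for i by (rule ext) (simp add: pgf_def fX_def)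
  have sC: "summable (\<lambda>m. \<bar>C m\<bar>)"
  proof (rule summable_comparison_test'[where N=0])
    show "summable (\<lambda>m. \<Sum>i<n. \<bar>a i (m + 1)\<bar>)" by (rule summable_sum) (use A in auto)
    show "norm \<bar>C m\<bar> \<le> (\<Sum>i<n. \<bar>a i (m + 1)\<bar>)" for m unfolding C_def by (simp add: sum_abs)
  qed
  obtain R where R: "\<And>i. i < n \<Longrightarrow> R i > 0 \<and> R i \<le> 1 \<and> (\<forall>z. \<bar>z\<bar> < R i \<longrightarrow>
            pgf M (X i) z \<noteq> 0 \<and>
            (\<lambda>m. a i (m + 1) * z ^ m) sums (deriv (pgf M (X i)) z / pgf M (X i) z))"
    using H by metis
  define r0 where "r0 = Min (R ` {..<n})"
  have r0pos: "r0 > 0" unfolding r0_def using R n0 by (subst Min_gr_iff) auto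
  have r0le: "r0 \<le> R i" if "i < n" for i unfolding r0_def using that by (intro Min_le) auto
  have r0le1: "r0 \<le> 1" using r0le[OF n0] R[OF n0] by simp
  have sums0: "(\<lambda>k. (diffs f k - (\<Sum>m\<le>k. C m * f (k - m))) * z ^ k) sums 0" if z: "\<bar>z\<bar> < r0" for z
  proof -
    have z1: "\<bar>z\<bar> < 1" using z r0le1 by simp
    have Ri: "pgf M (X i) z \<noteq> 0 \<and> (\<lambda>m. a i (m + 1) * z ^ m) sums (deriv (pgf M (X i)) z / pgf M (X i) z)"
      if "i < n" for i using R[OF that] r0le[OF that] z by auto
    have dX: "(pgf M (X i) has_field_derivative deriv (pgf M (X i)) z) (at z)" if "i < n" for i
    proof -
      have "summable (\<lambda>k. fX i k * 1 ^ k)" using fXs[OF that] by (simp add: sums_summable)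
      from termdiffs_strong[OF this, of z] z1
      have "(pgf M (X i) has_field_derivative (\<Sum>k. diffs (fX i) k * z ^ k)) (at z)"
        unfolding pgfX by simp
      then show ?thesis using DERIV_imp_deriv by metis
    qed
    define Gi where "Gi i = deriv (pgf M (X i)) z / pgf M (X i) z" for i
    have dXe: "deriv (pgf M (X i)) z = Gi i * pgf M (X i) z" if "i < n" for i
      using Ri[OF that] by (simp add: Gi_def)
    have dprod: "((\<lambda>w. \<Prod>i<n. pgf M (X i) w) has_field_derivative
        (\<Sum>i<n. deriv (pgf M (X i)) z * (\<Prod>j\<in>{..<n}-{i}. pgf M (X j) z))) (at z)"
      by (rule has_field_derivative_prod) (use dX in auto)
    have e: "(\<Sum>i<n. deriv (pgf M (X i)) z * (\<Prod>j\<in>{..<n}-{i}. pgf M (X j) z))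
           = (\<Sum>i<n. Gi i) * (\<Prod>j<n. pgf M (X j) z)"
    proof -
      have "(\<Sum>i<n. deriv (pgf M (X i)) z * (\<Prod>j\<in>{..<n}-{i}. pgf M (X j) z))
          = (\<Sum>i<n. Gi i * (\<Prod>j<n. pgf M (X j) z))"
      proof (rule sum.cong[OF refl])
        fix i assume i: "i \<in> {..<n}"
        have "(\<Prod>j<n. pgf M (X j) z) = pgf M (X i) z * (\<Prod>j\<in>{..<n}-{i}. pgf M (X j) z)"
          using i by (simp add: prod.remove)
        then show "deriv (pgf M (X i)) z * (\<Prod>j\<in>{..<n}-{i}. pgf M (X j) z) = Gi i * (\<Prod>j<n. pgf M (X j) z)"
          using dXe i by simp
      qed
      then show ?thesis by (simp add: sum_distrib_right)
    qed
    have dY1: "(pgf M Y has_field_derivative (\<Sum>i<n. Gi i) * pgf M Y z) (at z)"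
    proof -
      have pz: "(\<Prod>j<n. pgf M (X j) z) = pgf M Y z" using pgf_prod[OF P I z1] by (simp add: Y_def[abs_def])
      have dP: "((\<lambda>w. \<Prod>i<n. pgf M (X i) w) has_field_derivative (\<Sum>i<n. Gi i) * pgf M Y z) (at z)"
        using dprod unfolding e pz .
      show ?thesis
    proof (rule has_field_derivative_transform_within_open[OF dP, of "ball 0 1"])
      show "open (ball (0::real) 1)" by simp
      show "z \<in> ball 0 1" using z1 by simp
      show "(\<Prod>i<n. pgf M (X i) w) = pgf M Y w" if "w \<in> ball 0 1" for w
        using pgf_prod[OF P I, of w] that by (simp add: Y_def[abs_def])
    qed
    qed
    have dY2: "(pgf M Y has_field_derivative (\<Sum>k. diffs f k * z ^ k)) (at z)"
    proof -
      have "summable (\<lambda>k. f k * 1 ^ k)" using fs by (simp add: sums_summable)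
      from termdiffs_strong[OF this, of z] z1 show ?thesis unfolding pgfY by simp
    qed
    have deq: "(\<Sum>k. diffs f k * z ^ k) = (\<Sum>i<n. Gi i) * pgf M Y z"
      using DERIV_unique[OF dY2 dY1] .
    have sf: "summable (\<lambda>k. f k * w ^ k)" if "norm w < 1" for w
    proof (rule summable_comparison_test'[where N=0])
      show "summable f" using fs by (rule sums_summable)
      show "norm (f k * w ^ k) \<le> f k" for k
        using f0[of k] that by (simp add: abs_mult power_abs mult_left_le power_le_one)
    qed
    have sd: "(\<lambda>k. diffs f k * z ^ k) sums ((\<Sum>i<n. Gi i) * pgf M Y z)"
      using summable_sums[OF termdiff_converges[of z 1 f]] sf z1 deq by simp
    have sG: "(\<lambda>m. C m * z ^ m) sums (\<Sum>i<n. Gi i)"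
    proof -
      have "(\<lambda>m. \<Sum>i<n. a i (m + 1) * z ^ m) sums (\<Sum>i<n. Gi i)"
        by (rule sums_sum) (use Ri in \<open>auto simp: Gi_def\<close>)
      then show ?thesis by (simp add: C_def sum_distrib_right)
    qed
    have n1: "summable (\<lambda>m. norm (C m * z ^ m))"
    proof (rule summable_comparison_test'[where N=0, OF sC])
      show "norm (norm (C m * z ^ m)) \<le> \<bar>C m\<bar>" for m
        using z1 by (simp add: abs_mult power_abs mult_left_le power_le_one)
    qed
    have n2: "summable (\<lambda>k. norm (f k * z ^ k))"
    proof (rule summable_comparison_test'[where N=0, OF sums_summable[OF fs]])
      show "norm (norm (f k * z ^ k)) \<le> f k" for k
        using z1 f0[of k] by (simp add: abs_mult power_abs mult_left_le power_le_one)
    qed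
    have cp: "(\<lambda>k. \<Sum>m\<le>k. C m * z ^ m * (f (k - m) * z ^ (k - m))) sums
        ((\<Sum>m. C m * z ^ m) * (\<Sum>k. f k * z ^ k))"
      by (rule Cauchy_product_sums[OF n1 n2])
    have cpe: "(\<Sum>m\<le>k. C m * z ^ m * (f (k - m) * z ^ (k - m))) = (\<Sum>m\<le>k. C m * f (k - m)) * z ^ k" for k
    proof -
      have "(\<Sum>m\<le>k. C m * z ^ m * (f (k - m) * z ^ (k - m))) = (\<Sum>m\<le>k. C m * f (k - m) * z ^ k)"
      proof (rule sum.cong[OF refl])
        fix m assume "m \<in> {..k}"
        then have "z ^ m * z ^ (k - m) = z ^ k" by (simp flip: power_add)
        then show "C m * z ^ m * (f (k - m) * z ^ (k - m)) = C m * f (k - m) * z ^ k"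
          by (metis mult.assoc mult.left_commute)
      qed
      then show ?thesis by (simp add: sum_distrib_right)
    qed
    have prodv: "(\<Sum>m. C m * z ^ m) * (\<Sum>k. f k * z ^ k) = (\<Sum>i<n. Gi i) * pgf M Y z"
      using sums_unique[OF sG] pgfY by simp
    have "(\<lambda>k. diffs f k * z ^ k - (\<Sum>m\<le>k. C m * f (k - m)) * z ^ k) sums
          ((\<Sum>i<n. Gi i) * pgf M Y z - (\<Sum>i<n. Gi i) * pgf M Y z)"
      using sums_diff[OF sd cp[unfolded cpe prodv]] .
    then show ?thesis by (simp add: algebra_simps)
  qed
  have "diffs f k - (\<Sum>m\<le>k. C m * f (k - m)) = 0"
    by (rule powser_unique0[OF r0pos sums0])
  then show ?thesis by (simp add: diffs_def f_def Y_def C_def)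
qed




theorem theorem3p1:
  fixes M :: "'a measure" and X :: "nat \<Rightarrow> 'a \<Rightarrow> nat" and n :: nat
    and a :: "nat \<Rightarrow> nat \<Rightarrow> real" and \<alpha> p \<mu> :: real
  assumes "prob_space M"
    and "prob_space.indep_vars M (\<lambda>_. count_space UNIV) X {..<n}"
    and "\<And>i. i < n \<Longrightarrow> \<exists>r>0. r \<le> 1 \<and> (\<forall>z. \<bar>z\<bar> < r \<longrightarrow>
            pgf M (X i) z \<noteq> 0 \<and>
            (\<lambda>m. a i (m + 1) * z ^ m) sums (deriv (pgf M (X i)) z / pgf M (X i) z))"
    and "\<And>i. i < n \<Longrightarrow> summable (\<lambda>m. a i (m + 1))"
    and "\<mu> = (\<Sum>i<n. \<Sum>m. a i (m + 1))"
    and "\<alpha> > 0" and "0 < p" and "p < 1"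
    and "\<alpha> * (1 - p) / p = \<mu>"
    and "\<And>i. i < n \<Longrightarrow>
           summable (\<lambda>l. real (Suc l) * \<bar>a i (l + 2) - (1 - p) * a i (l + 1)\<bar>)"
  shows "dTV M (\<lambda>\<omega>. \<Sum>i<n. X i \<omega>) (nb_pmf \<alpha> p)
         \<le> 1 / (\<alpha> * (1 - p)) *
           (\<Sum>i<n. \<Sum>l. real (Suc l) * \<bar>a i (l + 2) - (1 - p) * a i (l + 1)\<bar>)"
proof -
  note P = assms(1) and I = assms(2) and H = assms(3) and As = assms(4) and mu = assms(5)
    and a0 = assms(6) and p0 = assms(7) and p1 = assms(8) and amu = assms(9) and Ds = assms(10)
  interpret prob_space M by (rule P)
  define q where "q = 1 - p"
  have q0: "0 < q" and q1: "q < 1" using p0 p1 by (auto simp: q_def)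
  define pi where "pi = nb_pmf \<alpha> p"
  have pipos: "\<And>k. 0 < pi k" unfolding pi_def using nb_pos[OF p0 p1 a0] .
  have pis: "pi sums 1" unfolding pi_def using nb_sums[OF p0 p1 a0] .
  have pirec: "\<And>k. real (Suc k) * pi (Suc k) = q * (\<alpha> + real k) * pi k"
    unfolding pi_def q_def using nb_rec[OF p0 p1] .
  have aqmu: "\<alpha> * q = p * \<mu>" using amu p0 by (simp add: q_def field_simps)
  have n0: "n > 0"
  proof (rule ccontr)
    assume "\<not> n > 0" then have "\<mu> = 0" using mu by simp
    then show False using aqmu a0 q0 p0 by simp
  qed
  have Aabs: "summable (\<lambda>m. \<bar>a i (m + 1)\<bar>)" if "i < n" for i
    by (rule abs_summ[of "1 - p"]) (use p0 p1 Ds[OF that] in auto)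
  define Y where "Y \<omega> = (\<Sum>i<n. X i \<omega>)" for \<omega>
  define f where "f k = measure M {\<omega> \<in> space M. Y \<omega> = k}" for k
  define C where "C m = (\<Sum>i<n. a i (m + 1))" for m
  have ident: "real (Suc k) * f (Suc k) = (\<Sum>m\<le>k. C m * f (k - m))" for k
    using coeff_identity[OF P I H Aabs n0, of k] by (simp add: f_def Y_def C_def)
  have Xm: "X i \<in> measurable M (count_space UNIV)" if "i < n" for i
    using I that unfolding indep_vars_def2 by auto
  have Ym: "Y \<in> measurable M (count_space UNIV)"
  proof -
    define X' where "X' i = (if i < n then X i else (\<lambda>_. 0))" for i
    have "X' i \<in> measurable M (count_space UNIV)" for i using Xm by (auto simp: X'_def)
    then have "(\<lambda>\<omega>. \<Sum>i<n. X' i \<omega>) \<in> measurable M (count_space UNIV)" by measurable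
    moreover have "(\<lambda>\<omega>. \<Sum>i<n. X' i \<omega>) = Y" by (auto simp: X'_def Y_def)
    ultimately show ?thesis by simp
  qed
  have fs: "f sums 1" unfolding f_def by (rule pmf_sums[OF P Ym])
  have fsum: "summable f" using fs by (rule sums_summable)
  have f0: "\<And>k. f k \<ge> 0" by (simp add: f_def)
  have sC: "summable (\<lambda>m. \<bar>C m\<bar>)"
  proof (rule summable_comparison_test'[where N=0])
    show "summable (\<lambda>m. \<Sum>i<n. \<bar>a i (m + 1)\<bar>)" by (rule summable_sum) (use Aabs in auto)
    show "norm \<bar>C m\<bar> \<le> (\<Sum>i<n. \<bar>a i (m + 1)\<bar>)" for m unfolding C_def by (simp add: sum_abs)
  qed
  have sC': "summable C" using sC by (rule summable_rabs_cancel)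
  have Cmu: "suminf C = \<mu>"
    unfolding mu C_def by (rule suminf_sum) (use As in auto)
  have fm: "summable (\<lambda>k. real k * f k)"
  proof -
    have cp: "summable (\<lambda>k. \<Sum>m\<le>k. \<bar>C m\<bar> * f (k - m))"
      using Cauchy_product_sums[of "\<lambda>m. \<bar>C m\<bar>" f] sC fsum f0
      by (auto intro: sums_summable)
    have "summable (\<lambda>k. real (Suc k) * f (Suc k))"
    proof (rule summable_comparison_test'[where N=0, OF cp])
      fix k
      have "norm (real (Suc k) * f (Suc k)) = \<bar>\<Sum>m\<le>k. C m * f (k - m)\<bar>" unfolding ident by simp
      also have "\<dots> \<le> (\<Sum>m\<le>k. \<bar>C m * f (k - m)\<bar>)" by (rule sum_abs)
      also have "\<dots> = (\<Sum>m\<le>k. \<bar>C m\<bar> * f (k - m))" using f0 by (simp add: abs_mult)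
      finally show "norm (real (Suc k) * f (Suc k)) \<le> (\<Sum>m\<le>k. \<bar>C m\<bar> * f (k - m))" .
    qed
    then show ?thesis using summable_Suc_iff[of "\<lambda>k. real k * f k"] by simp
  qed
  define E where "E l = C (Suc l) - q * C l" for l
  have Eeq: "E l = (\<Sum>i<n. a i (l + 2) - (1 - p) * a i (l + 1))" for l
    by (simp add: E_def C_def q_def sum_subtractf sum_distrib_left numeral_2_eq_2)
  define T where "T l = (\<Sum>i<n. real (Suc l) * \<bar>a i (l + 2) - (1 - p) * a i (l + 1)\<bar>)" for l
  have sT: "summable T" unfolding T_def by (rule summable_sum) (use Ds in auto)
  have ET: "real (Suc l) * \<bar>E l\<bar> \<le> T l" for l
  proof -
    have "real (Suc l) * \<bar>E l\<bar> \<le> real (Suc l) * (\<Sum>i<n. \<bar>a i (l + 2) - (1 - p) * a i (l + 1)\<bar>)"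
      unfolding Eeq by (intro mult_left_mono sum_abs) simp
    then show ?thesis by (simp add: T_def sum_distrib_left)
  qed
  have Es: "summable (\<lambda>l. real (Suc l) * \<bar>E l\<bar>)"
    by (rule summable_comparison_test'[where N=0, OF sT]) (use ET in simp)
  have Ebound: "(\<Sum>l. real (Suc l) * \<bar>E l\<bar>) \<le> (\<Sum>i<n. \<Sum>l. real (Suc l) * \<bar>a i (l + 2) - (1 - p) * a i (l + 1)\<bar>)"
  proof -
    have "(\<Sum>l. real (Suc l) * \<bar>E l\<bar>) \<le> suminf T" by (rule suminf_le[OF ET Es sT])
    also have "suminf T = (\<Sum>i<n. \<Sum>l. real (Suc l) * \<bar>a i (l + 2) - (1 - p) * a i (l + 1)\<bar>)"
      unfolding T_def by (rule suminf_sum) (use Ds in auto)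
    finally show ?thesis .
  qed
  have sumE: "(\<Sum>l. E l) = \<alpha> * q - C 0"
  proof -
    have s1: "summable (\<lambda>l. C (Suc l))" using sC' by (simp add: summable_Suc_iff)
    have "(\<Sum>l. E l) = (\<Sum>l. C (Suc l)) - q * suminf C"
      unfolding E_def using suminf_diff[OF s1 summable_mult[OF sC', of q]] suminf_mult[OF sC', of q] by simp
    also have "(\<Sum>l. C (Suc l)) = suminf C - C 0" by (rule suminf_split_head[OF sC'])
    finally show ?thesis unfolding Cmu aqmu by (simp add: q_def algebra_simps)
  qed
  have id1: "real (Suc k) * f (Suc k) = C 0 * f k + (\<Sum>l<k. C (Suc l) * f (k - 1 - l))" for k
  proof (cases k)
    case 0 then show ?thesis using ident[of 0] by simp
  next
    case (Suc k')
    have "(\<Sum>m\<le>k. C m * f (k - m)) = C 0 * f k + (\<Sum>l\<le>k'. C (Suc l) * f (k - Suc l))"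
      unfolding Suc by (subst sum.atMost_Suc_shift) simp
    also have "(\<Sum>l\<le>k'. C (Suc l) * f (k - Suc l)) = (\<Sum>l<k. C (Suc l) * f (k - 1 - l))"
      unfolding Suc by (simp add: lessThan_Suc_atMost)
    finally show ?thesis using ident[of k] by simp
  qed
  have id2: "real k * f k = (\<Sum>l<k. C l * f (k - 1 - l))" for k
  proof (cases k)
    case 0 then show ?thesis by simp
  next
    case (Suc k')
    show ?thesis using ident[of k'] unfolding Suc by (simp add: lessThan_Suc_atMost)
  qed
  have key: "q * (\<alpha> + real k) * f k - real (Suc k) * f (Suc k)
                 = (\<Sum>l. E l) * f k - (\<Sum>l<k. E l * f (k - 1 - l))" for k
  proof -
    have "q * (\<alpha> + real k) * f k = \<alpha> * q * f k + q * (real k * f k)" by (simp add: algebra_simps)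
    also have "\<dots> = \<alpha> * q * f k + q * (\<Sum>l<k. C l * f (k - 1 - l))" unfolding id2 ..
    finally have h: "q * (\<alpha> + real k) * f k = \<alpha> * q * f k + q * (\<Sum>l<k. C l * f (k - 1 - l))" .
    have "(\<Sum>l<k. E l * f (k - 1 - l)) = (\<Sum>l<k. C (Suc l) * f (k - 1 - l)) - q * (\<Sum>l<k. C l * f (k - 1 - l))"
      unfolding E_def by (simp add: sum_subtractf sum_distrib_left algebra_simps)
    then show ?thesis unfolding h id1 sumE by (simp add: algebra_simps)
  qed
  define ind where "ind k = (if f k > pi k then 1 else 0::real)" for k
  have ind01: "\<And>k. ind k = 0 \<or> ind k = 1" by (simp add: ind_def)
  have SB: "(\<Sum>k. f k * (ind k - PA pi ind)) \<le> 1 / (q * \<alpha>) * (\<Sum>l. real (Suc l) * \<bar>E l\<bar>)"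
    by (rule stein_bound[OF pipos pis pirec q0 q1 a0 ind01 f0 fs fm Es key])
  have PAe: "PA pi ind = (\<Sum>k. pi k * ind k)" by (rule PA_def[OF pipos pis pirec q0 q1 a0 ind01])
  have pisum: "summable pi" using pis by (rule sums_summable)
  have sfi: "summable (\<lambda>k. f k * ind k)"
    by (rule summable_comparison_test'[where N=0, OF fsum]) (use f0 in \<open>simp add: ind_def\<close>)
  have spi: "summable (\<lambda>k. pi k * ind k)"
    by (rule summable_comparison_test'[where N=0, OF pisum]) (use pipos in \<open>simp add: ind_def less_imp_le\<close>)
  have dtv: "dTV M Y pi = (\<Sum>k. f k * (ind k - PA pi ind))"
  proof -
    have abs_eq: "\<bar>f k - pi k\<bar> = 2 * (f k * ind k - pi k * ind k) - (f k - pi k)" for k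
      by (simp add: ind_def)
    have "(\<Sum>k. \<bar>f k - pi k\<bar>) = (\<Sum>k. 2 * (f k * ind k - pi k * ind k) - (f k - pi k))"
      unfolding abs_eq ..
    also have "\<dots> = 2 * ((\<Sum>k. f k * ind k) - (\<Sum>k. pi k * ind k)) - (suminf f - suminf pi)"
    proof -
      have s1: "summable (\<lambda>k. 2 * (f k * ind k - pi k * ind k))" by (intro summable_mult summable_diff sfi spi)
      have s2: "summable (\<lambda>k. f k - pi k)" by (intro summable_diff fsum pisum)
      have "(\<Sum>k. 2 * (f k * ind k - pi k * ind k) - (f k - pi k))
          = (\<Sum>k. 2 * (f k * ind k - pi k * ind k)) - (\<Sum>k. f k - pi k)"
        by (rule suminf_diff[OF s1 s2, symmetric])
      also have "(\<Sum>k. 2 * (f k * ind k - pi k * ind k)) = 2 * (\<Sum>k. f k * ind k - pi k * ind k)"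
        by (rule suminf_mult[OF summable_diff[OF sfi spi]])
      also have "(\<Sum>k. f k * ind k - pi k * ind k) = (\<Sum>k. f k * ind k) - (\<Sum>k. pi k * ind k)"
        by (rule suminf_diff[OF sfi spi, symmetric])
      also have "(\<Sum>k. f k - pi k) = suminf f - suminf pi" by (rule suminf_diff[OF fsum pisum, symmetric])
      finally show ?thesis .
    qed
    also have "suminf f = 1" using fs by (rule sums_unique[symmetric])
    also have "suminf pi = 1" using pis by (rule sums_unique[symmetric])
    finally have ab: "(\<Sum>k. \<bar>f k - pi k\<bar>) = 2 * ((\<Sum>k. f k * ind k) - PA pi ind)" unfolding PAe by simp
    have "(\<Sum>k. f k * (ind k - PA pi ind)) = (\<Sum>k. f k * ind k - f k * PA pi ind)"
      by (simp add: algebra_simps)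
    also have "\<dots> = (\<Sum>k. f k * ind k) - (\<Sum>k. f k * PA pi ind)"
      by (rule suminf_diff[symmetric, OF sfi summable_mult2[OF fsum]])
    also have "(\<Sum>k. f k * PA pi ind) = PA pi ind"
      using suminf_mult2[OF fsum, of "PA pi ind"] \<open>suminf f = 1\<close> by simp
    finally show ?thesis unfolding dTV_def f_def[symmetric] ab by simp
  qed
  have "dTV M (\<lambda>\<omega>. \<Sum>i<n. X i \<omega>) (nb_pmf \<alpha> p) = dTV M Y pi"
    by (simp add: Y_def[abs_def] pi_def)
  also have "\<dots> \<le> 1 / (q * \<alpha>) * (\<Sum>l. real (Suc l) * \<bar>E l\<bar>)" unfolding dtv by (rule SB)
  also have "\<dots> \<le> 1 / (q * \<alpha>) * (\<Sum>i<n. \<Sum>l. real (Suc l) * \<bar>a i (l + 2) - (1 - p) * a i (l + 1)\<bar>)"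
    by (rule mult_left_mono[OF Ebound]) (use q0 a0 in simp)
  finally show ?thesis by (simp add: q_def mult.commute)
qed


end
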